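(* Let $\mathcal{S}=\{1,\dots,S\}$, $T>0$, let $R_t$ be the rate matrix of a forward CTMC with $X_0\sim p_{\text{data}}$, conditionals $q_{t|0}$, marginals $q_t$ and posterior $p(x_0\mid x_t)$, and let $\hat R_t(i,j)=R_t(j,i)q_t(j)/q_t(i)$ be the true reverse rates, $\hat R_t(i,j\mid x_0)=R_t(j,i)\frac{q_{t|0}(j\mid x_0)}{q_{t|0}(i\mid x_0)}$ the conditional reverse rates, and $f(r,c)=r\log\frac rc-r+c$. Let $R^\theta_t(i,j)$ be model reverse rates, and define \[ \mathcal{L}_{\mathrm{KL}}(\theta):=\int_0^T\mathbb{E}_{x_0\sim p_{\text{data}},\,x_t\sim q_{t|0}(\cdot\mid x_0)}\Bigl[\sum_{j\ne x_t}f\bigl(\hat R_t(x_t,j\mid x_0),R^\theta_t(x_t,j)\bigr)\Bigr]\mathrm{d}t, \] \[ \mathrm{KL}(\hat{\mathbb{Q}}\|\mathbb{P}^\theta):=\int_0^T\sum_iq_t(i)\sum_{j\ne i}f\bigl(\hat R_t(i,j),R^\theta_t(i,j)\bigr)\mathrm{d}t. \] Assume: (i) the forward quantities $q_t$, $q_{t|0}$, $p(x_0\mid x_t)$ do not depend on $\theta$; (ii) $R^\theta_t(i,j)>0$ and is differentiable in $\theta$ for all $i\ne j$; (iii) differentiation in $\theta$ can be exchanged with expectation/integration. Then there is a $\theta$-independent constant $C_{\mathrm{gap}}\ge0$ with $\mathcal{L}_{\mathrm{KL}}(\theta)=\mathrm{KL}(\hat{\mathbb{Q}}\|\mathbb{P}^\theta)+C_{\mathrm{gap}}$;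 hence $\nabla_\theta\mathcal{L}_{\mathrm{KL}}(\theta)=\nabla_\theta\mathrm{KL}(\hat{\mathbb{Q}}\|\mathbb{P}^\theta)$, $\arg\min_\theta\mathcal{L}_{\mathrm{KL}}(\theta)=\arg\min_\theta\mathrm{KL}(\hat{\mathbb{Q}}\|\mathbb{P}^\theta)$, and every stationary point of one objective is a stationary point of the other.
   Context: A rate matrix $R_t$ satisfies $R_t(i,j)\ge0$ ($i\ne j$), $\sum_jR_t(i,j)=0$. $q_{t|0}(i\mid x_0)=\mathbb{P}(X_t=i\mid X_0=x_0)$, $q_t(i)=\sum_{x_0}p_{\text{data}}(x_0)q_{t|0}(i\mid x_0)$, $p(x_0\mid x_t)=p_{\text{data}}(x_0)q_{t|0}(x_t\mid x_0)/q_t(x_t)$. $\hat{\mathbb{Q}}$ and $\mathbb{P}^\theta$ denote the path measures of the true reverse process and of the generative process with rates $R^\theta_t$. All ratios and logarithms are assumed well defined (convention $0\log0=0$). *)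

theory Defs
  imports "HOL-Analysis.Analysis"
begin

text \<open>State space: an arbitrary finite type 's (playing the role of {1,...,S}).  Conditionals: qcond t i x0 = q_{t|0}(i | x0).\<close>

definition rate_matrix :: "('s::finite \<Rightarrow> 's \<Rightarrow> real) \<Rightarrow> bool" where
  "rate_matrix Q \<longleftrightarrow> (\<forall>i j. i \<noteq> j \<longrightarrow> Q i j \<ge> 0) \<and> (\<forall>i. (\<Sum>j\<in>UNIV. Q i j) = 0)"

definition is_distribution :: "('s::finite \<Rightarrow> real) \<Rightarrow> bool" where
  "is_distribution p \<longleftrightarrow> (\<forall>x. p x \<ge> 0) \<and> (\<Sum>x\<in>UNIV. p x) = 1"

definition q_marg :: "('s::finite \<Rightarrow> real) \<Rightarrow> (real \<Rightarrow> 's \<Rightarrow> 's \<Rightarrow> real) \<Rightarrow> real \<Rightarrow> 's \<Rightarrow> real" where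
  "q_marg pdata qcond t i = (\<Sum>x0\<in>UNIV. pdata x0 * qcond t i x0)"

definition rev_rate :: "(real \<Rightarrow> 's::finite \<Rightarrow> 's \<Rightarrow> real) \<Rightarrow> ('s \<Rightarrow> real) \<Rightarrow> (real \<Rightarrow> 's \<Rightarrow> 's \<Rightarrow> real)
    \<Rightarrow> real \<Rightarrow> 's \<Rightarrow> 's \<Rightarrow> real" where
  "rev_rate R pdata qcond t i j = R t j i * q_marg pdata qcond t j / q_marg pdata qcond t i"

definition cond_rev_rate :: "(real \<Rightarrow> 's \<Rightarrow> 's \<Rightarrow> real) \<Rightarrow> (real \<Rightarrow> 's \<Rightarrow> 's \<Rightarrow> real)
    \<Rightarrow> real \<Rightarrow> 's \<Rightarrow> 's \<Rightarrow> 's \<Rightarrow> real" where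
  "cond_rev_rate R qcond t x0 i j = R t j i * qcond t j x0 / qcond t i x0"

text \<open>f(r,c) = r log(r/c) - r + c  (with 0 log 0 = 0, automatic since 0 * _ = 0).\<close>
definition fdiv :: "real \<Rightarrow> real \<Rightarrow> real" where
  "fdiv r c = r * ln (r / c) - r + c"

definition LKL_integrand :: "(real \<Rightarrow> 's::finite \<Rightarrow> 's \<Rightarrow> real) \<Rightarrow> ('s \<Rightarrow> real) \<Rightarrow> (real \<Rightarrow> 's \<Rightarrow> 's \<Rightarrow> real)
    \<Rightarrow> ('p \<Rightarrow> real \<Rightarrow> 's \<Rightarrow> 's \<Rightarrow> real) \<Rightarrow> 'p \<Rightarrow> real \<Rightarrow> real" where
  "LKL_integrand R pdata qcond Rth th t =
     (\<Sum>x0\<in>UNIV. pdata x0 * (\<Sum>xt\<in>UNIV. qcond t xt x0 *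
        (\<Sum>j\<in>UNIV - {xt}. fdiv (cond_rev_rate R qcond t x0 xt j) (Rth th t xt j))))"

definition KL_integrand :: "(real \<Rightarrow> 's::finite \<Rightarrow> 's \<Rightarrow> real) \<Rightarrow> ('s \<Rightarrow> real) \<Rightarrow> (real \<Rightarrow> 's \<Rightarrow> 's \<Rightarrow> real)
    \<Rightarrow> ('p \<Rightarrow> real \<Rightarrow> 's \<Rightarrow> 's \<Rightarrow> real) \<Rightarrow> 'p \<Rightarrow> real \<Rightarrow> real" where
  "KL_integrand R pdata qcond Rth th t =
     (\<Sum>i\<in>UNIV. q_marg pdata qcond t i *
        (\<Sum>j\<in>UNIV - {i}. fdiv (rev_rate R pdata qcond t i j) (Rth th t i j)))"

definition L_KL :: "real \<Rightarrow> (real \<Rightarrow> 's::finite \<Rightarrow> 's \<Rightarrow> real) \<Rightarrow> ('s \<Rightarrow> real) \<Rightarrow> (real \<Rightarrow> 's \<Rightarrow> 's \<Rightarrow> real)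
    \<Rightarrow> ('p \<Rightarrow> real \<Rightarrow> 's \<Rightarrow> 's \<Rightarrow> real) \<Rightarrow> 'p \<Rightarrow> real" where
  "L_KL T R pdata qcond Rth th = (LINT t:{0..T}|lborel. LKL_integrand R pdata qcond Rth th t)"

definition KL_path :: "real \<Rightarrow> (real \<Rightarrow> 's::finite \<Rightarrow> 's \<Rightarrow> real) \<Rightarrow> ('s \<Rightarrow> real) \<Rightarrow> (real \<Rightarrow> 's \<Rightarrow> 's \<Rightarrow> real)
    \<Rightarrow> ('p \<Rightarrow> real \<Rightarrow> 's \<Rightarrow> 's \<Rightarrow> real) \<Rightarrow> 'p \<Rightarrow> real" where
  "KL_path T R pdata qcond Rth th = (LINT t:{0..T}|lborel. KL_integrand R pdata qcond Rth th t)"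

end

theory Submission
  imports Defs
begin

definition hh :: "real \<Rightarrow> real" where "hh r = r * ln r - r"

definition Dgap where
  "Dgap R pdata qcond t i j = (\<Sum>x0\<in>UNIV. pdata x0 * qcond t i x0 * hh (cond_rev_rate R qcond t x0 i j))
      - q_marg pdata qcond t i * hh (rev_rate R pdata qcond t i j)"

lemma fdiv_split: "r \<ge> 0 \<Longrightarrow> c > 0 \<Longrightarrow> fdiv r c = hh r + c - r * ln c"
  unfolding fdiv_def hh_def
  by (cases "r = 0") (auto simp: ln_div algebra_simps)

lemma fdiv_nonneg: "r \<ge> 0 \<Longrightarrow> c > 0 \<Longrightarrow> fdiv r c \<ge> 0"
proof -
  assume r: "r \<ge> 0" and c: "c > 0"
  show ?thesis
  proof (cases "r = 0")
    case True thus ?thesis using c by (simp add: fdiv_def)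
  next
    case False
    hence rp: "r > 0" using r by simp
    have "ln (c / r) \<le> c / r - 1" using c rp by (intro ln_le_minus_one) simp
    hence "r * ln (c / r) \<le> r * (c / r - 1)" using rp by (intro mult_left_mono) auto
    moreover have "ln (r / c) = - ln (c / r)" using rp c by (simp add: ln_div)
    moreover have "r * (c / r - 1) = c - r" using rp by (simp add: field_simps)
    ultimately show ?thesis by (simp add: fdiv_def)
  qed
qed

lemma qmarg_pos:
  assumes "\<forall>x. pdata x \<ge> 0" "sum pdata UNIV = (1::real)" "\<forall>i x0. qcond t i x0 > 0"
  shows "q_marg pdata qcond t (i::'s::finite) > 0"
proof -
  have "\<exists>x. pdata x > 0"
  proof (rule ccontr)
    assume "\<not> (\<exists>x. pdata x > 0)"
    hence "\<forall>x. pdata x = 0" using assms(1) by (simp add: not_less antisym)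
    thus False using assms(2) by simp
  qed
  then obtain x where x: "pdata x > 0" by blast
  have "0 < pdata x * qcond t i x" using x assms(3) by simp
  also have "\<dots> \<le> q_marg pdata qcond t i" unfolding q_marg_def
    by (rule member_le_sum) (use assms in \<open>auto intro!: mult_nonneg_nonneg simp: less_imp_le\<close>)
  finally show ?thesis .
qed

lemma per_ij:
  assumes p: "\<forall>x. pdata x \<ge> 0" "sum pdata UNIV = (1::real)" and q: "\<forall>i x0. qcond t i x0 > 0"
    and Rn: "R t j i \<ge> 0" and c: "c > 0"
  shows "(\<Sum>x0\<in>UNIV. pdata x0 * qcond t i x0 * fdiv (cond_rev_rate R qcond t x0 i j) c)
     = q_marg pdata qcond t i * fdiv (rev_rate R pdata qcond t i (j::'s::finite)) c + Dgap R pdata qcond t i j"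
proof -
  have qi: "q_marg pdata qcond t i > 0" using p q by (intro qmarg_pos) auto
  have qj: "q_marg pdata qcond t j > 0" using p q by (intro qmarg_pos) auto
  have rx: "cond_rev_rate R qcond t x0 i j \<ge> 0" for x0
    unfolding cond_rev_rate_def using q Rn by (simp add: less_imp_le)
  have rh: "rev_rate R pdata qcond t i j \<ge> 0"
    unfolding rev_rate_def using qi qj Rn by simp
  have key: "(\<Sum>x0\<in>UNIV. pdata x0 * qcond t i x0 * cond_rev_rate R qcond t x0 i j)
      = q_marg pdata qcond t i * rev_rate R pdata qcond t i j"
  proof -
    have "(\<Sum>x0\<in>UNIV. pdata x0 * qcond t i x0 * cond_rev_rate R qcond t x0 i j)
       = (\<Sum>x0\<in>UNIV. R t j i * (pdata x0 * qcond t j x0))"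
      by (rule sum.cong) (use q in \<open>auto simp: cond_rev_rate_def field_simps less_imp_neq[symmetric]\<close>)
    also have "\<dots> = R t j i * q_marg pdata qcond t j"
      by (simp add: q_marg_def sum_distrib_left)
    also have "\<dots> = q_marg pdata qcond t i * rev_rate R pdata qcond t i j"
      using qi by (simp add: rev_rate_def)
    finally show ?thesis .
  qed
  have "(\<Sum>x0\<in>UNIV. pdata x0 * qcond t i x0 * fdiv (cond_rev_rate R qcond t x0 i j) c)
     = (\<Sum>x0\<in>UNIV. pdata x0 * qcond t i x0 * hh (cond_rev_rate R qcond t x0 i j)
         + c * (pdata x0 * qcond t i x0) - ln c * (pdata x0 * qcond t i x0 * cond_rev_rate R qcond t x0 i j))"
    by (rule sum.cong) (use rx c in \<open>auto simp: fdiv_split algebra_simps\<close>)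
  also have "\<dots> = (\<Sum>x0\<in>UNIV. pdata x0 * qcond t i x0 * hh (cond_rev_rate R qcond t x0 i j))
         + c * q_marg pdata qcond t i - ln c * (q_marg pdata qcond t i * rev_rate R pdata qcond t i j)"
    by (simp add: sum.distrib sum_subtractf sum_distrib_left[symmetric] key q_marg_def)
  also have "\<dots> = q_marg pdata qcond t i * fdiv (rev_rate R pdata qcond t i (j::'s::finite)) c + Dgap R pdata qcond t i j"
    using rh c by (simp add: fdiv_split Dgap_def algebra_simps)
  finally show ?thesis .
qed

lemma Dgap_nonneg:
  assumes p: "\<forall>x. pdata x \<ge> 0" "sum pdata UNIV = (1::real)" and q: "\<forall>i x0. qcond t i x0 > 0"
    and Rn: "R t j i \<ge> 0"
  shows "Dgap R pdata qcond t i (j::'s::finite) \<ge> 0"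
proof -
  have qi: "q_marg pdata qcond t i > 0" using p q by (intro qmarg_pos) auto
  have qj: "q_marg pdata qcond t j > 0" using p q by (intro qmarg_pos) auto
  show ?thesis
  proof (cases "R t j i = 0")
    case True
    thus ?thesis by (simp add: Dgap_def cond_rev_rate_def rev_rate_def hh_def)
  next
    case False
    hence rp: "rev_rate R pdata qcond t i j > 0" using Rn qi qj by (simp add: rev_rate_def)
    have rx: "cond_rev_rate R qcond t x0 i j \<ge> 0" for x0
      unfolding cond_rev_rate_def using q Rn by (simp add: less_imp_le)
    have "0 \<le> (\<Sum>x0\<in>UNIV. pdata x0 * qcond t i x0 * fdiv (cond_rev_rate R qcond t x0 i j) (rev_rate R pdata qcond t i j))"
      by (intro sum_nonneg mult_nonneg_nonneg fdiv_nonneg rx rp) (use p q in \<open>auto simp: less_imp_le\<close>)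
    also have "\<dots> = Dgap R pdata qcond t i j"
      using per_ij[where pdata=pdata and qcond=qcond and t=t and R=R and i=i and j=j, OF p q Rn rp] rp by (simp add: fdiv_def)
    finally show ?thesis .
  qed
qed

definition Gap where
  "Gap R pdata qcond t = (\<Sum>i\<in>UNIV. \<Sum>j\<in>UNIV - {i}. Dgap R pdata qcond t i j)"

lemma pointwise:
  fixes R :: "real \<Rightarrow> 's::finite \<Rightarrow> 's \<Rightarrow> real" and pdata :: "'s \<Rightarrow> real"
    and qcond :: "real \<Rightarrow> 's \<Rightarrow> 's \<Rightarrow> real"
  assumes p: "\<forall>x. pdata x \<ge> 0" "sum pdata UNIV = (1::real)" and q: "\<forall>i x0. qcond t i x0 > 0"
    and Rn: "\<forall>i j. i \<noteq> j \<longrightarrow> R t i j \<ge> 0"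
    and c: "\<forall>i j. i \<noteq> j \<longrightarrow> Rth th t i j > 0"
  shows "LKL_integrand R pdata qcond Rth th t = KL_integrand R pdata qcond Rth th t + Gap R pdata qcond (t::real)"
proof -
  have "LKL_integrand R pdata qcond Rth th t =
     (\<Sum>x0\<in>UNIV. \<Sum>i\<in>UNIV. \<Sum>j\<in>UNIV - {i}. pdata x0 * qcond t i x0 * fdiv (cond_rev_rate R qcond t x0 i j) (Rth th t i j))"
    unfolding LKL_integrand_def by (simp add: sum_distrib_left mult.assoc)
  also have "\<dots> = (\<Sum>i\<in>UNIV. \<Sum>x0\<in>UNIV. \<Sum>j\<in>UNIV - {i}. pdata x0 * qcond t i x0 * fdiv (cond_rev_rate R qcond t x0 i j) (Rth th t i j))"
    by (rule sum.swap)
  also have "\<dots> = (\<Sum>i\<in>UNIV. \<Sum>j\<in>UNIV - {i}. \<Sum>x0\<in>UNIV. pdata x0 * qcond t i x0 * fdiv (cond_rev_rate R qcond t x0 i j) (Rth th t i j))"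
    by (rule sum.cong[OF refl], rule sum.swap)
  also have "\<dots> = (\<Sum>i\<in>UNIV. \<Sum>j\<in>UNIV - {i}. q_marg pdata qcond t i * fdiv (rev_rate R pdata qcond t i j) (Rth th t i j) + Dgap R pdata qcond t i j)"
  proof (intro sum.cong refl)
    fix i j :: 's assume "j \<in> UNIV - {i}"
    hence ij: "j \<noteq> i" by auto
    show "(\<Sum>x0\<in>UNIV. pdata x0 * qcond t i x0 * fdiv (cond_rev_rate R qcond t x0 i j) (Rth th t i j))
        = q_marg pdata qcond t i * fdiv (rev_rate R pdata qcond t i j) (Rth th t i j) + Dgap R pdata qcond t i j"
      using Rn c ij by (intro per_ij[where pdata=pdata and qcond=qcond and t=t, OF p q]) auto
  qed
  also have "\<dots> = KL_integrand R pdata qcond Rth th t + Gap R pdata qcond t"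
    unfolding KL_integrand_def Gap_def by (simp add: sum.distrib sum_distrib_left)
  finally show ?thesis .
qed

lemma Gap_nonneg:
  fixes R :: "real \<Rightarrow> 's::finite \<Rightarrow> 's \<Rightarrow> real" and pdata :: "'s \<Rightarrow> real"
    and qcond :: "real \<Rightarrow> 's \<Rightarrow> 's \<Rightarrow> real"
  assumes p: "\<forall>x. pdata x \<ge> 0" "sum pdata UNIV = (1::real)" and q: "\<forall>i x0. qcond t i x0 > 0"
    and Rn: "\<forall>i j. i \<noteq> j \<longrightarrow> R t i j \<ge> 0"
  shows "Gap R pdata qcond t \<ge> 0"
  unfolding Gap_def using Rn by (intro sum_nonneg Dgap_nonneg[where pdata=pdata and qcond=qcond and t=t, OF p q]) auto

theorem proposition4p8:
  fixes T :: real
    and R :: "real \<Rightarrow> 's::finite \<Rightarrow> 's \<Rightarrow> real"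
    and pdata :: "'s \<Rightarrow> real"
    and qcond :: "real \<Rightarrow> 's \<Rightarrow> 's \<Rightarrow> real"
    and Rth :: "'p::real_normed_vector \<Rightarrow> real \<Rightarrow> 's \<Rightarrow> 's \<Rightarrow> real"
  assumes T_pos: "T > 0"
    and rate: "\<forall>t\<in>{0..T}. rate_matrix (R t)"
    and pdata_distr: "is_distribution pdata"
    and q_distr: "\<forall>t\<in>{0..T}. \<forall>x0. is_distribution (\<lambda>i. qcond t i x0)"
    and q_init: "\<forall>i x0. qcond 0 i x0 = (if i = x0 then 1 else 0)"
    and kolmogorov: "\<forall>x0 j. \<forall>t\<in>{0..T}.
          ((\<lambda>s. qcond s j x0) has_real_derivative (\<Sum>i\<in>UNIV. qcond t i x0 * R t i j)) (at t within {0..T})"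
    and q_pos: "\<forall>t\<in>{0<..T}. \<forall>i x0. qcond t i x0 > 0"
    and Rth_pos: "\<forall>th. \<forall>t\<in>{0..T}. \<forall>i j. i \<noteq> j \<longrightarrow> Rth th t i j > 0"
    and Rth_diff: "\<forall>th. \<forall>t\<in>{0..T}. \<forall>i j. i \<noteq> j \<longrightarrow> (\<lambda>th'. Rth th' t i j) differentiable (at th)"
    and int_LKL: "\<forall>th. set_integrable lborel {0..T} (LKL_integrand R pdata qcond Rth th)"
    and int_KL: "\<forall>th. set_integrable lborel {0..T} (KL_integrand R pdata qcond Rth th)"
  shows "\<exists>C::real. C \<ge> 0 \<and>
           (\<forall>th. L_KL T R pdata qcond Rth th = KL_path T R pdata qcond Rth th + C) \<and>
           (\<forall>th D. (L_KL T R pdata qcond Rth has_derivative D) (at th)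
                   \<longleftrightarrow> (KL_path T R pdata qcond Rth has_derivative D) (at th)) \<and>
           (\<forall>th. (\<forall>th'. L_KL T R pdata qcond Rth th \<le> L_KL T R pdata qcond Rth th')
                   \<longleftrightarrow> (\<forall>th'. KL_path T R pdata qcond Rth th \<le> KL_path T R pdata qcond Rth th')) \<and>
           (\<forall>th. (L_KL T R pdata qcond Rth has_derivative (\<lambda>_. 0)) (at th)
                   \<longleftrightarrow> (KL_path T R pdata qcond Rth has_derivative (\<lambda>_. 0)) (at th))"
proof -
  have p: "\<forall>x. pdata x \<ge> 0" "sum pdata UNIV = (1::real)"
    using pdata_distr by (auto simp: is_distribution_def)
  have pw: "LKL_integrand R pdata qcond Rth th t = KL_integrand R pdata qcond Rth th t + Gap R pdata qcond t"
    and gnn: "Gap R pdata qcond t \<ge> 0"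
    if t: "t \<in> {0<..T}" for th t
  proof -
    have q: "\<forall>i x0. qcond t i x0 > 0" using q_pos t by blast
    have Rn: "\<forall>i j. i \<noteq> j \<longrightarrow> R t i j \<ge> 0" using rate t by (auto simp: rate_matrix_def)
    have c: "\<forall>i j. i \<noteq> j \<longrightarrow> Rth th t i j > 0" using Rth_pos t by auto
    show "LKL_integrand R pdata qcond Rth th t = KL_integrand R pdata qcond Rth th t + Gap R pdata qcond t"
      by (rule pointwise[where pdata=pdata and qcond=qcond and t=t and R=R and Rth=Rth and th=th, OF p q Rn c])
    show "Gap R pdata qcond t \<ge> 0" by (rule Gap_nonneg[where pdata=pdata and qcond=qcond and t=t and R=R, OF p q Rn])
  qed
  define d where "d th t = LKL_integrand R pdata qcond Rth th t - KL_integrand R pdata qcond Rth th t" for th t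
  have dint: "set_integrable lborel {0..T} (d th)" for th
    unfolding d_def using int_LKL int_KL by blast
  have dval: "L_KL T R pdata qcond Rth th - KL_path T R pdata qcond Rth th = (LINT t:{0..T}|lborel. d th t)" for th
    unfolding L_KL_def KL_path_def d_def using int_LKL int_KL by (simp add: set_integral_diff(2))
  have AEne: "AE t\<in>{0..T} in lborel. t \<in> {0<..T}"
    by (rule eventually_mono[OF AE_lborel_singleton[of 0]]) auto
  have dle: "(LINT t:{0..T}|lborel. d th1 t) \<le> (LINT t:{0..T}|lborel. d th2 t)" for th1 th2
    by (rule set_integral_mono_AE[OF dint dint], rule eventually_mono[OF AEne]) (auto simp: d_def pw)
  define C where "C = L_KL T R pdata qcond Rth 0 - KL_path T R pdata qcond Rth 0"
  have eqC: "L_KL T R pdata qcond Rth th = KL_path T R pdata qcond Rth th + C" for th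
    using dle[of th 0] dle[of 0 th] dval[of th] dval[of 0] unfolding C_def by linarith
  have z: "set_integrable lborel {0..T} (\<lambda>_. 0::real)" by (simp add: set_integrable_def)
  have "(LINT t:{0..T}|lborel. (0::real)) \<le> (LINT t:{0..T}|lborel. d 0 t)"
    by (rule set_integral_mono_AE[OF z dint], rule eventually_mono[OF AEne]) (auto simp: d_def pw gnn)
  hence Cnn: "C \<ge> 0" unfolding C_def using dval[of 0] by simp
  have feq: "L_KL T R pdata qcond Rth = (\<lambda>th. KL_path T R pdata qcond Rth th + C)"
    using eqC by auto
  have deriv: "(L_KL T R pdata qcond Rth has_derivative D) (at th)
       \<longleftrightarrow> (KL_path T R pdata qcond Rth has_derivative D) (at th)" for D th
  proof
    assume "(L_KL T R pdata qcond Rth has_derivative D) (at th)"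
    hence "((\<lambda>th. (KL_path T R pdata qcond Rth th + C) + (- C)) has_derivative D) (at th)"
      unfolding feq by (rule has_derivative_add_const)
    thus "(KL_path T R pdata qcond Rth has_derivative D) (at th)" by simp
  next
    assume "(KL_path T R pdata qcond Rth has_derivative D) (at th)"
    thus "(L_KL T R pdata qcond Rth has_derivative D) (at th)"
      unfolding feq by (rule has_derivative_add_const)
  qed
  show ?thesis
    by (intro exI[of _ C] conjI Cnn allI eqC deriv) (simp add: eqC)
qed

end
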